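(* Let $S$ be a bounded ordered set. For each $i\in S$ let $\langle P_i;\nu_i\rangle$ be a bounded ordered set with $|P_i|\ge 2$, and assume that there are elements $0,1$ such that $0$ and $1$ are the least and greatest elements of every $P_i$ and $P_i\cap P_j=\{0,1\}$ for all $i\ne j$ in $S$. For $i\le j$ in $S$ let $\psi_{ij}\colon P_i\to P_j$ be $0$-separating $\{0,1\}$-preserving monotone maps with $\psi_{ii}=\mathrm{id}_{P_i}$ and $\psi_{jk}\circ\psi_{ij}=\psi_{ik}$ for $i\le j\le k$. Fix $j\in S$, let $R_j=\bigcup\{P_i: i\le j\}$, let \[\hat\nu_j=\mathrm{quo}_{R_j}\Bigl(\bigcup_{i\le j}\nu_i\ \cup\ \bigcup_{i\le j}\psi_{ij}\ \cup\ \bigcup_{i\le j}\psi_{ij}^{-1}\Bigr),\] where maps are regarded as subsets of $R_j^2$ via their graphs $\psi_{ij}=\{(x,\psi_{ij}(x)):x\in P_i\}$ and $\psi_{ij}^{-1}=\{(\psi_{ij}(x),x):x\in P_i\}$, and let $\hat\Theta_j=\hat\nu_j\cap\hat\nu_j^{-1}$. Then the map \[\kappa_j\colon\langle R_j/\hat\Theta_j;\hat\nu_j/\hat\Theta_j\rangle\to\langle P_j;\nu_j\rangle,\qquad \kappa_j(x/\hat\Theta_j)=\psi_{ij}(x)\ \text{ for } x\in P_i,\ i\le j,\] is well defined and is an order isomorphism.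
   Context: An ordered set is bounded if it has a least and a greatest element. For bounded ordered sets $P,Q$, a map $\psi\colon P\to Q$ is a $\{0,1\}$-preserving monotone map if it maps least element to least element, greatest to greatest, and is order-preserving; it is $0$-separating if moreover only the least element of $P$ maps to the least element of $Q$. A quasiordering on a nonempty set $H$ is a reflexive, transitive relation $\nu\subseteq H^2$; for $X\subseteq H^2$, $\mathrm{quo}_H(X)$ denotes the least quasiordering on $H$ containing $X$. For a quasiordered set $\langle H;\nu\rangle$ with $\Theta=\nu\cap\nu^{-1}$ (an equivalence relation), $H/\Theta$ is ordered by $(x/\Theta,y/\Theta)\in\nu/\Theta$ iff $(x,y)\in\nu$. *)

theory Defs
  imports Main
begin

definition quasiorder_on :: "'a set \<Rightarrow> 'a rel \<Rightarrow> bool" where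
  "quasiorder_on H \<nu> \<longleftrightarrow> \<nu> \<subseteq> H \<times> H \<and> (\<forall>x\<in>H. (x, x) \<in> \<nu>) \<and> trans \<nu>"

definition order_on :: "'a set \<Rightarrow> 'a rel \<Rightarrow> bool" where
  "order_on H \<nu> \<longleftrightarrow> quasiorder_on H \<nu> \<and> antisym \<nu>"

definition is_least :: "'a set \<Rightarrow> 'a rel \<Rightarrow> 'a \<Rightarrow> bool" where
  "is_least H \<nu> z \<longleftrightarrow> z \<in> H \<and> (\<forall>x\<in>H. (z, x) \<in> \<nu>)"

definition is_greatest :: "'a set \<Rightarrow> 'a rel \<Rightarrow> 'a \<Rightarrow> bool" where
  "is_greatest H \<nu> z \<longleftrightarrow> z \<in> H \<and> (\<forall>x\<in>H. (x, z) \<in> \<nu>)"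

definition bounded_order :: "'a set \<Rightarrow> 'a rel \<Rightarrow> bool" where
  "bounded_order H \<nu> \<longleftrightarrow> order_on H \<nu> \<and> (\<exists>z. is_least H \<nu> z) \<and> (\<exists>u. is_greatest H \<nu> u)"

definition mono_01 :: "'a set \<Rightarrow> 'a rel \<Rightarrow> 'b set \<Rightarrow> 'b rel \<Rightarrow> ('a \<Rightarrow> 'b) \<Rightarrow> bool" where
  "mono_01 P \<nu> Q \<mu> f \<longleftrightarrow> f ` P \<subseteq> Q
     \<and> (\<forall>z. is_least P \<nu> z \<longrightarrow> is_least Q \<mu> (f z))
     \<and> (\<forall>u. is_greatest P \<nu> u \<longrightarrow> is_greatest Q \<mu> (f u))
     \<and> (\<forall>x\<in>P. \<forall>y\<in>P. (x, y) \<in> \<nu> \<longrightarrow> (f x, f y) \<in> \<mu>)"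

definition zero_separating :: "'a set \<Rightarrow> 'a rel \<Rightarrow> 'b set \<Rightarrow> 'b rel \<Rightarrow> ('a \<Rightarrow> 'b) \<Rightarrow> bool" where
  "zero_separating P \<nu> Q \<mu> f \<longleftrightarrow> mono_01 P \<nu> Q \<mu> f
     \<and> (\<forall>x\<in>P. is_least Q \<mu> (f x) \<longrightarrow> is_least P \<nu> x)"

definition quo :: "'a set \<Rightarrow> 'a rel \<Rightarrow> 'a rel" where
  "quo H X = \<Inter> {\<nu>. quasiorder_on H \<nu> \<and> X \<subseteq> \<nu>}"

definition quot_order :: "'a rel \<Rightarrow> 'a rel \<Rightarrow> 'a set rel" where
  "quot_order \<nu> \<Theta> = {(\<Theta> `` {x}, \<Theta> `` {y}) | x y. (x, y) \<in> \<nu>}"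

definition order_iso :: "'a set \<Rightarrow> 'a rel \<Rightarrow> 'b set \<Rightarrow> 'b rel \<Rightarrow> ('a \<Rightarrow> 'b) \<Rightarrow> bool" where
  "order_iso A r B s f \<longleftrightarrow> bij_betw f A B \<and> (\<forall>x\<in>A. \<forall>y\<in>A. (x, y) \<in> r \<longleftrightarrow> (f x, f y) \<in> s)"

end

theory Submission
  imports Defs
begin

theorem lemma2:
  fixes S :: "'i::order set"
    and P :: "'i \<Rightarrow> 'a set"
    and \<nu> :: "'i \<Rightarrow> 'a rel"
    and \<psi> :: "'i \<Rightarrow> 'i \<Rightarrow> 'a \<Rightarrow> 'a"
    and z0 z1 :: 'a
    and j :: 'i
  assumes S_bounded: "\<exists>b\<in>S. \<exists>t\<in>S. \<forall>i\<in>S. b \<le> i \<and> i \<le> t"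
    and P_bounded: "\<forall>i\<in>S. bounded_order (P i) (\<nu> i)"
    and P_card: "\<forall>i\<in>S. \<exists>x\<in>P i. \<exists>y\<in>P i. x \<noteq> y"
    and P_01: "\<forall>i\<in>S. is_least (P i) (\<nu> i) z0 \<and> is_greatest (P i) (\<nu> i) z1"
    and P_disj: "\<forall>i\<in>S. \<forall>k\<in>S. i \<noteq> k \<longrightarrow> P i \<inter> P k = {z0, z1}"
    and \<psi>_maps: "\<forall>i\<in>S. \<forall>k\<in>S. i \<le> k \<longrightarrow> zero_separating (P i) (\<nu> i) (P k) (\<nu> k) (\<psi> i k)"
    and \<psi>_id: "\<forall>i\<in>S. \<forall>x\<in>P i. \<psi> i i x = x"
    and \<psi>_comp: "\<forall>i\<in>S. \<forall>k\<in>S. \<forall>l\<in>S. i \<le> k \<and> k \<le> l \<longrightarrow>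
                   (\<forall>x\<in>P i. \<psi> k l (\<psi> i k x) = \<psi> i l x)"
    and j_in: "j \<in> S"
  shows "let R = \<Union> {P i | i. i \<in> S \<and> i \<le> j};
             \<nu>hat = quo R (\<Union> {\<nu> i | i. i \<in> S \<and> i \<le> j}
                 \<union> \<Union> {{(x, \<psi> i j x) | x. x \<in> P i} | i. i \<in> S \<and> i \<le> j}
                 \<union> \<Union> {{(\<psi> i j x, x) | x. x \<in> P i} | i. i \<in> S \<and> i \<le> j});
             \<Theta>hat = \<nu>hat \<inter> \<nu>hat\<inverse>
         in \<exists>\<kappa>. (\<forall>i\<in>S. i \<le> j \<longrightarrow> (\<forall>x\<in>P i. \<kappa> (\<Theta>hat `` {x}) = \<psi> i j x))
             \<and> order_iso (R // \<Theta>hat) (quot_order \<nu>hat \<Theta>hat) (P j) (\<nu> j) \<kappa>"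
proof -
  define R where "R = \<Union> {P i | i. i \<in> S \<and> i \<le> j}"
  define X where "X = \<Union> {\<nu> i | i. i \<in> S \<and> i \<le> j}
                 \<union> \<Union> {{(x, \<psi> i j x) | x. x \<in> P i} | i. i \<in> S \<and> i \<le> j}
                 \<union> \<Union> {{(\<psi> i j x, x) | x. x \<in> P i} | i. i \<in> S \<and> i \<le> j}"
  define nh where "nh = quo R X"
  define Th where "Th = nh \<inter> nh\<inverse>"
  define idx where "idx x = (SOME i. i \<in> S \<and> i \<le> j \<and> x \<in> P i)" for x
  define g where "g x = \<psi> (idx x) j x" for x
  have ordi: "\<And>i. i \<in> S \<Longrightarrow> \<nu> i \<subseteq> P i \<times> P i \<and> (\<forall>x\<in>P i. (x, x) \<in> \<nu> i) \<and> trans (\<nu> i) \<and> antisym (\<nu> i)"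
    using P_bounded unfolding bounded_order_def order_on_def quasiorder_on_def by blast
  have psi01: "\<psi> i j z0 = z0 \<and> \<psi> i j z1 = z1" if "i \<in> S" "i \<le> j" for i
  proof -
    have m: "mono_01 (P i) (\<nu> i) (P j) (\<nu> j) (\<psi> i j)"
      using \<psi>_maps that j_in unfolding zero_separating_def by blast
    have a: "is_least (P j) (\<nu> j) (\<psi> i j z0)" "is_greatest (P j) (\<nu> j) (\<psi> i j z1)"
      using m P_01 that unfolding mono_01_def by blast+
    have b: "is_least (P j) (\<nu> j) z0" "is_greatest (P j) (\<nu> j) z1" using P_01 j_in by blast+
    have "antisym (\<nu> j)" using ordi j_in by blast
    then show ?thesis using a b unfolding is_least_def is_greatest_def antisym_def by blast
  qed
  have idx: "idx x \<in> S \<and> idx x \<le> j \<and> x \<in> P (idx x)" if "x \<in> R" for x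
  proof -
    have "\<exists>i. i \<in> S \<and> i \<le> j \<and> x \<in> P i" using that unfolding R_def by blast
    then show ?thesis unfolding idx_def by (rule someI_ex)
  qed
  have gx: "g x = \<psi> i j x" if "i \<in> S" "i \<le> j" "x \<in> P i" for i x
  proof -
    have xR: "x \<in> R" using that unfolding R_def by blast
    note k = idx[OF xR]
    show ?thesis
    proof (cases "idx x = i")
      case True then show ?thesis unfolding g_def by simp
    next
      case False
      then have "x \<in> {z0, z1}" using P_disj k that by blast
      then show ?thesis unfolding g_def using psi01 k that by auto
    qed
  qed
  have gPj: "g x \<in> P j" if "x \<in> R" for x
  proof -
    note k = idx[OF that]
    have "mono_01 (P (idx x)) (\<nu> (idx x)) (P j) (\<nu> j) (\<psi> (idx x) j)"
      using \<psi>_maps k j_in unfolding zero_separating_def by blast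
    then show ?thesis using k unfolding mono_01_def g_def by blast
  qed
  have gid: "g y = y" if "y \<in> P j" for y
    using gx[OF j_in order_refl that] \<psi>_id j_in that by simp
  have PjR: "P j \<subseteq> R" unfolding R_def using j_in by blast
  define \<rho> where "\<rho> = {(x, y). x \<in> R \<and> y \<in> R \<and> (g x, g y) \<in> \<nu> j}"
  have oj: "\<nu> j \<subseteq> P j \<times> P j" "\<forall>x\<in>P j. (x, x) \<in> \<nu> j" "trans (\<nu> j)" "antisym (\<nu> j)"
    using ordi[OF j_in] by auto
  have rq: "quasiorder_on R \<rho>"
    unfolding quasiorder_on_def
  proof (intro conjI ballI)
    show "\<rho> \<subseteq> R \<times> R" unfolding \<rho>_def by auto
    show "(x, x) \<in> \<rho>" if "x \<in> R" for x using that gPj oj(2) unfolding \<rho>_def by auto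
    show "trans \<rho>" unfolding \<rho>_def using oj(3) by (auto intro!: transI dest: transD)
  qed
  have XR: "X \<subseteq> \<rho>"
  proof
    fix p assume "p \<in> X"
    then consider (a) i where "i \<in> S" "i \<le> j" "p \<in> \<nu> i"
      | (b) i x where "i \<in> S" "i \<le> j" "x \<in> P i" "p = (x, \<psi> i j x)"
      | (c) i x where "i \<in> S" "i \<le> j" "x \<in> P i" "p = (\<psi> i j x, x)"
      unfolding X_def by blast
    then show "p \<in> \<rho>"
    proof cases
      case a
      then obtain x y where p: "p = (x, y)" "x \<in> P i" "y \<in> P i" using ordi by (cases p) blast
      have "mono_01 (P i) (\<nu> i) (P j) (\<nu> j) (\<psi> i j)"
        using \<psi>_maps a j_in unfolding zero_separating_def by blast
      then have "(\<psi> i j x, \<psi> i j y) \<in> \<nu> j" using a p unfolding mono_01_def by blast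
      moreover have "x \<in> R" "y \<in> R" using a p unfolding R_def by blast+
      ultimately show ?thesis using p gx a unfolding \<rho>_def by simp
    next
      case b
      have xR: "x \<in> R" using b unfolding R_def by blast
      have gj: "g x \<in> P j" using gPj xR .
      have "\<psi> i j x = g x" using gx b by simp
      then show ?thesis using b xR gj PjR gid oj(2) unfolding \<rho>_def by auto
    next
      case c
      have xR: "x \<in> R" using c unfolding R_def by blast
      have gj: "g x \<in> P j" using gPj xR .
      have "\<psi> i j x = g x" using gx c by simp
      then show ?thesis using c xR gj PjR gid oj(2) unfolding \<rho>_def by auto
    qed
  qed
  have nh_eq: "nh = \<rho>"
  proof
    show "nh \<subseteq> \<rho>" unfolding nh_def quo_def using rq XR by blast
    show "\<rho> \<subseteq> nh" unfolding nh_def quo_def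
    proof (rule Inter_greatest)
      fix \<mu> assume "\<mu> \<in> {\<nu>. quasiorder_on R \<nu> \<and> X \<subseteq> \<nu>}"
      then have q: "quasiorder_on R \<mu>" and Xm: "X \<subseteq> \<mu>" by auto
      show "\<rho> \<subseteq> \<mu>"
      proof clarify
        fix x y assume "(x, y) \<in> \<rho>"
        then have xy: "x \<in> R" "y \<in> R" "(g x, g y) \<in> \<nu> j" unfolding \<rho>_def by auto
        have "(x, g x) \<in> X"
          using idx[OF xy(1)] unfolding X_def g_def by blast
        moreover have "(g x, g y) \<in> X" using xy j_in unfolding X_def by blast
        moreover have "(g y, y) \<in> X"
          using idx[OF xy(2)] unfolding X_def g_def by blast
        ultimately have "(x, g x) \<in> \<mu>" "(g x, g y) \<in> \<mu>" "(g y, y) \<in> \<mu>" using Xm by blast+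
        moreover have "trans \<mu>" using q unfolding quasiorder_on_def by blast
        ultimately show "(x, y) \<in> \<mu>" by (meson transD)
      qed
    qed
  qed
  have Th_eq: "Th = {(x, y). x \<in> R \<and> y \<in> R \<and> g x = g y}"
    unfolding Th_def nh_eq \<rho>_def using oj(2,4) gPj by (auto dest: antisymD)
  have cls: "Th `` {x} = {y \<in> R. g y = g x}" if "x \<in> R" for x
    using that unfolding Th_eq by auto
  define \<kappa> where "\<kappa> C = g (SOME x. x \<in> C)" for C
  have kap: "\<kappa> (Th `` {x}) = g x" if "x \<in> R" for x
  proof -
    have "x \<in> Th `` {x}" using cls that by auto
    then have "(SOME y. y \<in> Th `` {x}) \<in> Th `` {x}" by (rule someI)
    then show ?thesis unfolding \<kappa>_def using cls that by auto
  qed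
  have clseq: "Th `` {x} = Th `` {y} \<longleftrightarrow> g x = g y" if "x \<in> R" "y \<in> R" for x y
    using cls that by auto
  have part1: "\<forall>i\<in>S. i \<le> j \<longrightarrow> (\<forall>x\<in>P i. \<kappa> (Th `` {x}) = \<psi> i j x)"
  proof (intro ballI impI)
    fix i x assume "i \<in> S" "i \<le> j" "x \<in> P i"
    moreover then have "x \<in> R" unfolding R_def by blast
    ultimately show "\<kappa> (Th `` {x}) = \<psi> i j x" using kap gx by simp
  qed
  have inj: "inj_on \<kappa> (R // Th)"
  proof (rule inj_onI)
    fix A B assume "A \<in> R // Th" "B \<in> R // Th" "\<kappa> A = \<kappa> B"
    then obtain x y where "x \<in> R" "y \<in> R" "A = Th `` {x}" "B = Th `` {y}" "\<kappa> A = \<kappa> B"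
      unfolding quotient_def by blast
    then show "A = B" using kap clseq by simp
  qed
  have img: "\<kappa> ` (R // Th) = P j"
  proof
    show "\<kappa> ` (R // Th) \<subseteq> P j" unfolding quotient_def using kap gPj by auto
    show "P j \<subseteq> \<kappa> ` (R // Th)"
    proof
      fix y assume y: "y \<in> P j"
      then have "y \<in> R" using PjR by blast
      then have "Th `` {y} \<in> R // Th" "\<kappa> (Th `` {y}) = y" using kap gid y
        unfolding quotient_def by auto
      then show "y \<in> \<kappa> ` (R // Th)" by force
    qed
  qed
  have ord: "\<forall>A\<in>R // Th. \<forall>B\<in>R // Th. (A, B) \<in> quot_order nh Th \<longleftrightarrow> (\<kappa> A, \<kappa> B) \<in> \<nu> j"
  proof (intro ballI)
    fix A B assume "A \<in> R // Th" "B \<in> R // Th"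
    then obtain x y where xy: "x \<in> R" "y \<in> R" "A = Th `` {x}" "B = Th `` {y}"
      unfolding quotient_def by blast
    show "(A, B) \<in> quot_order nh Th \<longleftrightarrow> (\<kappa> A, \<kappa> B) \<in> \<nu> j"
    proof
      assume "(A, B) \<in> quot_order nh Th"
      then obtain x' y' where "A = Th `` {x'}" "B = Th `` {y'}" "(x', y') \<in> nh"
        unfolding quot_order_def by blast
      moreover then have "x' \<in> R" "y' \<in> R" "(g x', g y') \<in> \<nu> j" unfolding nh_eq \<rho>_def by auto
      ultimately show "(\<kappa> A, \<kappa> B) \<in> \<nu> j" using kap by simp
    next
      assume "(\<kappa> A, \<kappa> B) \<in> \<nu> j"
      then have "(x, y) \<in> nh" using xy kap unfolding nh_eq \<rho>_def by simp
      then show "(A, B) \<in> quot_order nh Th" using xy unfolding quot_order_def by blast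
    qed
  qed
  have "order_iso (R // Th) (quot_order nh Th) (P j) (\<nu> j) \<kappa>"
    unfolding order_iso_def bij_betw_def using inj img ord by blast
  then show ?thesis using part1 unfolding Let_def R_def[symmetric] X_def[symmetric]
      nh_def[symmetric] Th_def[symmetric] by blast
qed

end
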